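(* For all even integers $n\ge2$ and real numbers $a\ge1$, $x,y\in(0,\pi)$, we have $\Theta_{n,a}(x,y)\ge 2\sin(x)\sin(y)\bigl(1+\cos(x)\cos(y)\bigr)$. Equality holds if and only if $n=2$, $a=1$.
   Context: For a real number $a$ and integers $0\le m$, $\binom{m+a}{m}=\frac{(a+1)(a+2)\cdots(a+m)}{m!}$ (equal to $1$ when $m=0$). For an integer $n\ge1$, $\Theta_{n,a}(x,y)=\sum_{j=1}^n\binom{n+a-j}{n-j}\frac{\sin(jx)\sin(jy)}{j}$. *)

theory Defs
  imports "HOL-Analysis.Analysis"
begin

text \<open>binom m a = binomial coefficient (m+a choose m) = (a+1)(a+2)...(a+m)/m!, real a.\<close>
definition binom_ma :: "nat \<Rightarrow> real \<Rightarrow> real" where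
  "binom_ma m a = (\<Prod>i=1..m. (a + real i)) / fact m"

definition Theta :: "nat \<Rightarrow> real \<Rightarrow> real \<Rightarrow> real \<Rightarrow> real" where
  "Theta n a x y = (\<Sum>j=1..n. binom_ma (n - j) a * sin (real j * x) * sin (real j * y) / real j)"

end

theory Submission
  imports Defs
begin

lemma sin_mult_abs_le: "\<bar>sin (real k * t)\<bar> \<le> real k * \<bar>sin t\<bar>"
proof (induction k)
  case 0 then show ?case by simp
next
  case (Suc k)
  have "sin (real (Suc k) * t) = sin (real k * t) * cos t + cos (real k * t) * sin t"
    by (simp add: distrib_right sin_add)
  also have "\<bar>\<dots>\<bar> \<le> \<bar>sin (real k * t)\<bar> * \<bar>cos t\<bar> + \<bar>cos (real k * t)\<bar> * \<bar>sin t\<bar>"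
    by (metis abs_mult abs_triangle_ineq)
  also have "\<dots> \<le> \<bar>sin (real k * t)\<bar> * 1 + 1 * \<bar>sin t\<bar>"
    by (intro add_mono mult_mono) auto
  finally show ?case using Suc by (simp add: distrib_right)
qed

lemma sin_mult_lt:
  assumes "0 < t" "t < pi" "2 \<le> k"
  shows "\<bar>sin (real k * t)\<bar> < real k * sin t"
  using assms(3)
proof (induction k rule: dec_induct)
  case base
  have st: "sin t > 0" using assms sin_gt_zero by auto
  have "cos t ^ 2 < 1" using st sin_cos_squared_add[of t]
    by (smt (verit) zero_less_power)
  hence "\<bar>cos t\<bar> < 1" by (simp add: abs_square_less_1)
  have "\<bar>sin (2 * t)\<bar> = 2 * sin t * \<bar>cos t\<bar>" using st by (simp add: sin_double abs_mult)
  also have "\<dots> < 2 * sin t * 1" using st \<open>\<bar>cos t\<bar> < 1\<close> by (intro mult_strict_left_mono) auto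
  finally show ?case by simp
next
  case (step k)
  have st: "sin t > 0" using assms sin_gt_zero by auto
  have "sin (real (Suc k) * t) = sin (real k * t) * cos t + cos (real k * t) * sin t"
    by (simp add: distrib_right sin_add)
  also have "\<bar>\<dots>\<bar> \<le> \<bar>sin (real k * t)\<bar> * \<bar>cos t\<bar> + \<bar>cos (real k * t)\<bar> * \<bar>sin t\<bar>"
    by (metis abs_mult abs_triangle_ineq)
  also have "\<dots> \<le> \<bar>sin (real k * t)\<bar> * 1 + 1 * \<bar>sin t\<bar>"
    by (intro add_mono mult_mono) auto
  finally show ?case using step st by (simp add: distrib_right)
qed

lemma sin_sum_pair: "sin (u + t) + sin (u - t) = 2 * sin u * cos (t::real)"
  by (simp add: sin_add sin_diff)

lemma D_closed:
  "2 * (1 - cos t) * (\<Sum>j=1..k. sin (real j * t)) = sin t + sin (real k * t) - sin (real (Suc k) * t)"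
proof (induction k)
  case 0 then show ?case by simp
next
  case (Suc k)
  have e: "sin (real (Suc (Suc k)) * t) + sin (real k * t) = 2 * sin (real (Suc k) * t) * cos t"
    using sin_sum_pair[of "real (Suc k) * t" t] by (simp add: algebra_simps)
  have "2 * (1 - cos t) * (\<Sum>j=1..Suc k. sin (real j * t))
      = 2 * (1 - cos t) * (\<Sum>j=1..k. sin (real j * t)) + 2 * (1 - cos t) * sin (real (Suc k) * t)"
    by (simp add: algebra_simps)
  also have "\<dots> = sin t + sin (real (Suc k) * t) - sin (real (Suc (Suc k)) * t)"
    using Suc e by (simp add: algebra_simps)
  finally show ?case .
qed

lemma F_closed:
  "2 * (1 - cos t) * (\<Sum>j=1..m. real (m + 1 - j) * sin (real j * t))
     = real (m + 1) * sin t - sin (real (Suc m) * t)"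
proof (induction m)
  case 0 then show ?case by simp
next
  case (Suc m)
  have "(\<Sum>j=1..Suc m. real (Suc m + 1 - j) * sin (real j * t))
      = (\<Sum>j=1..Suc m. real (m + 1 - j) * sin (real j * t) + sin (real j * t))"
    by (intro sum.cong) (auto simp: Suc_diff_le algebra_simps)
  also have "\<dots> = (\<Sum>j=1..m. real (m + 1 - j) * sin (real j * t)) + (\<Sum>j=1..Suc m. sin (real j * t))"
    by (simp add: sum.distrib)
  finally have "2 * (1 - cos t) * (\<Sum>j=1..Suc m. real (Suc m + 1 - j) * sin (real j * t))
     = 2 * (1 - cos t) * (\<Sum>j=1..m. real (m + 1 - j) * sin (real j * t))
       + 2 * (1 - cos t) * (\<Sum>j=1..Suc m. sin (real j * t))"
    by (simp add: algebra_simps)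
  also have "\<dots> = real (Suc m + 1) * sin t - sin (real (Suc (Suc m)) * t)"
    unfolding Suc.IH D_closed by (simp add: algebra_simps)
  finally show ?case .
qed

lemma F_closed_gen:
  assumes "m \<le> N"
  shows "2 * (1 - cos t) * (\<Sum>j=1..N. real (m + 1 - j) * sin (real j * t))
     = real (m + 1) * sin t - sin (real (Suc m) * t)"
proof -
  have "(\<Sum>j=1..N. real (m + 1 - j) * sin (real j * t)) = (\<Sum>j=1..m. real (m + 1 - j) * sin (real j * t))"
    using assms by (intro sum.mono_neutral_right) auto
  then show ?thesis using F_closed by simp
qed

lemma pos_sum:
  fixes w :: "nat \<Rightarrow> real"
  assumes Q: "\<And>t. 0 < t \<Longrightarrow> t < pi \<Longrightarrow> t \<noteq> pi/2 \<Longrightarrow> (\<Sum>j=1..N. w j * sin (real j * t)) > 0"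
    and x: "0 < x" "x < pi" and y: "0 < y" "y < pi"
  shows "(\<Sum>j=1..N. w j * sin (real j * x) * sin (real j * y) / real j) > 0"
proof -
  define G where "G t = (\<Sum>j=1..N. - w j * cos (real j * t) / real j)" for t
  have dG: "DERIV G t :> (\<Sum>j=1..N. w j * sin (real j * t))" for t
  proof -
    have "DERIV G t :> (\<Sum>j=1..N. - w j * (- sin (real j * t) * real j) / real j)"
      unfolding G_def by (intro derivative_eq_intros) auto
    also have "(\<Sum>j=1..N. - w j * (- sin (real j * t) * real j) / real j) = (\<Sum>j=1..N. w j * sin (real j * t))"
      by (intro sum.cong) auto
    finally show ?thesis .
  qed
  have ev: "G (-t) = G t" for t unfolding G_def by simp
  have per: "G (2*pi - t) = G t" for t
  proof -
    have "cos (real j * (2*pi - t)) = cos (real j * t)" for j :: nat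
    proof -
      have "real j * (2*pi - t) = 2 * pi * real_of_int (int j) - real j * t" by (simp add: algebra_simps)
      then show ?thesis by (simp only: cos_diff cos_int_2pin sin_int_2pin)
    qed
    then show ?thesis unfolding G_def by simp
  qed
  have aux: "G p < G q" if "0 \<le> p" "p < q" "q \<le> pi" "\<not> (p < pi/2 \<and> pi/2 < q)" for p q
  proof -
    obtain z where z: "p < z" "z < q" "G q - G p = (q - p) * (\<Sum>j=1..N. w j * sin (real j * z))"
      using MVT2[OF \<open>p < q\<close>, of G "\<lambda>t. (\<Sum>j=1..N. w j * sin (real j * t))"] dG by blast
    have "z \<noteq> pi/2" using that z by auto
    hence "(\<Sum>j=1..N. w j * sin (real j * z)) > 0" using Q[of z] that z by auto
    then show ?thesis using z that by (smt (verit) mult_pos_pos)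
  qed
  have mono: "G p < G q" if "0 \<le> p" "p < q" "q \<le> pi" for p q
  proof (cases "p < pi/2 \<and> pi/2 < q")
    case True
    have "G p < G (pi/2)" using aux[of p "pi/2"] True that by auto
    also have "\<dots> < G q" using aux[of "pi/2" q] True that by auto
    finally show ?thesis .
  next
    case False then show ?thesis using aux that by auto
  qed
  have key: "(\<Sum>j=1..N. w j * sin (real j * x) * sin (real j * y) / real j) = (G (x + y) - G (x - y)) / 2"
  proof -
    have "w j * sin (real j * x) * sin (real j * y) / real j
        = ((- w j * cos (real j * (x + y)) / real j) - (- w j * cos (real j * (x - y)) / real j)) / 2" for j
    proof -
      have "sin (real j * x) * sin (real j * y) = (cos (real j * x - real j * y) - cos (real j * x + real j * y)) / 2"
        by (rule sin_times_sin)
      then have "w j * sin (real j * x) * sin (real j * y) / real j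
          = w j * ((cos (real j * x - real j * y) - cos (real j * x + real j * y)) / 2) / real j"
        by (metis mult.assoc)
      also have "\<dots> = ((- w j * cos (real j * (x + y)) / real j) - (- w j * cos (real j * (x - y)) / real j)) / 2"
        by (cases "j = 0") (simp_all add: distrib_left right_diff_distrib field_simps)
      finally show ?thesis .
    qed
    then have "(\<Sum>j=1..N. w j * sin (real j * x) * sin (real j * y) / real j)
       = (\<Sum>j=1..N. ((- w j * cos (real j * (x + y)) / real j) - (- w j * cos (real j * (x - y)) / real j)) / 2)"
      by (intro sum.cong) auto
    also have "\<dots> = (G (x + y) - G (x - y)) / 2"
      unfolding G_def by (simp only: sum_divide_distrib[symmetric] sum_subtractf)
    finally show ?thesis .
  qed
  have Gm: "G (x - y) = G \<bar>x - y\<bar>" using ev by (cases "x \<le> y") (auto, metis minus_diff_eq)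
  have "G \<bar>x - y\<bar> < G (x + y)"
  proof (cases "x + y \<le> pi")
    case True then show ?thesis using x y by (intro mono) auto
  next
    case False
    have "G \<bar>x - y\<bar> < G (2*pi - (x + y))" using x y False by (intro mono) auto
    then show ?thesis using per[of "x+y"] by simp
  qed
  then show ?thesis using key Gm by simp
qed

lemma one_minus_cos_pos: "0 < t \<Longrightarrow> t < pi \<Longrightarrow> 0 < 1 - cos t"
  using cos_monotone_0_pi[of 0 t] by auto

lemma Phi_pos:
  assumes "1 \<le> m" "m \<le> N" and x: "0 < x" "x < pi" and y: "0 < y" "y < pi"
  shows "(\<Sum>j=1..N. real (m + 1 - j) * sin (real j * x) * sin (real j * y) / real j) > 0"
proof (rule pos_sum[OF _ x y])
  fix t :: real assume t: "0 < t" "t < pi"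
  have "\<bar>sin (real (m+1) * t)\<bar> < real (m+1) * sin t" using sin_mult_lt[OF t, of "m+1"] assms by auto
  hence "0 < 2 * (1 - cos t) * (\<Sum>j=1..N. real (m + 1 - j) * sin (real j * t))"
    using F_closed_gen[OF assms(2), of t] by auto
  moreover have "0 < 2 * (1 - cos t)" using one_minus_cos_pos[OF t] by simp
  ultimately show "(\<Sum>j=1..N. real (m + 1 - j) * sin (real j * t)) > 0"
    by (simp add: zero_less_mult_iff)
qed

lemma sin_odd_diff:
  assumes "2 \<le> k" "0 \<le> sin t"
  shows "sin (real (2*k+1) * t) - sin (3 * t) \<le> (real (2*k) - 4) * sin t + 2 * cos (4 * t) * sin t"
  using assms(1)
proof (induction k rule: dec_induct)
  case base
  have "sin (5 * t) - sin (3 * t) = 2 * sin ((5*t - 3*t)/2) * cos ((5*t + 3*t)/2)" by (rule sin_diff_sin)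
  also have "\<dots> = 2 * cos (4 * t) * sin t" by simp
  finally show ?case by simp
next
  case (step k)
  have "sin (real (2*Suc k+1) * t) - sin (real (2*k+1) * t)
      = 2 * sin ((real (2*Suc k+1) * t - real (2*k+1) * t)/2) * cos ((real (2*Suc k+1) * t + real (2*k+1) * t)/2)"
    by (rule sin_diff_sin)
  also have "(real (2*Suc k+1) * t - real (2*k+1) * t)/2 = t" by (simp add: algebra_simps)
  finally have "sin (real (2*Suc k+1) * t) - sin (real (2*k+1) * t) \<le> 2 * sin t"
    using assms(2) by (smt (verit) cos_le_one mult_left_le)
  moreover have "(real (2*Suc k) - 4) * sin t = (real (2*k) - 4) * sin t + 2 * sin t"
    by (simp add: algebra_simps)
  ultimately show ?case using step by linarith
qed

lemma cos4_lt:
  assumes "0 < t" "t < pi" "t \<noteq> pi/2"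
  shows "cos (4 * t) < 1"
proof -
  have "cos (4 * t) \<noteq> 1"
  proof
    assume "cos (4 * t) = 1"
    then obtain n :: int where n: "4 * t = real_of_int n * 2 * pi" using cos_one_2pi_int by blast
    have "0 < real_of_int n" using n assms pi_gt_zero by (smt (verit) mult_nonpos_nonneg mult_nonneg_nonneg)
    moreover have "real_of_int n < 2"
    proof -
      have e: "real_of_int n * (2*pi) = 4*t" using n by (simp add: algebra_simps)
      have "real_of_int n * (2*pi) < 2 * (2*pi)" unfolding e using assms by linarith
      then show ?thesis by (rule mult_right_less_imp_less) (use pi_gt_zero in simp)
    qed
    ultimately have "n = 1" by linarith
    then show False using n assms by simp
  qed
  then show ?thesis using cos_le_one[of "4*t"] by linarith
qed

lemma diff_pos:
  assumes "even n" "4 \<le> n" and x: "0 < x" "x < pi" and y: "0 < y" "y < pi"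
  shows "(\<Sum>j=1..n. (real (n + 1 - j) - real (2 + 1 - j)) * sin (real j * x) * sin (real j * y) / real j) > 0"
proof (rule pos_sum[OF _ x y])
  fix t :: real assume t: "0 < t" "t < pi" "t \<noteq> pi/2"
  obtain k where k: "n = 2 * k" using assms(1) by blast
  have st: "0 < sin t" using t sin_gt_zero by auto
  have "sin (real (2*k+1) * t) - sin (3 * t) \<le> (real (2*k) - 4) * sin t + 2 * cos (4 * t) * sin t"
    using sin_odd_diff[of k t] k assms st by auto
  moreover have "2 * cos (4 * t) * sin t < 2 * sin t" using cos4_lt[OF t] st by simp
  moreover have "(real n - 2) * sin t = (real (2*k) - 4) * sin t + 2 * sin t"
    using k by (simp add: algebra_simps)
  ultimately have A: "sin (real (n+1) * t) - sin (3 * t) < (real n - 2) * sin t" using k by simp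
  have "(\<Sum>j=1..n. (real (n + 1 - j) - real (2 + 1 - j)) * sin (real j * t))
     = (\<Sum>j=1..n. real (n + 1 - j) * sin (real j * t)) - (\<Sum>j=1..n. real (2 + 1 - j) * sin (real j * t))"
    by (simp add: sum_subtractf left_diff_distrib)
  hence "2 * (1 - cos t) * (\<Sum>j=1..n. (real (n + 1 - j) - real (2 + 1 - j)) * sin (real j * t))
      = (real (n + 1) * sin t - sin (real (Suc n) * t)) - (real (2 + 1) * sin t - sin (real (Suc 2) * t))"
    using F_closed_gen[of n n t] F_closed_gen[of 2 n t] assms by (simp add: right_diff_distrib)
  also have "\<dots> > 0" using A by (simp add: algebra_simps)
  finally have "0 < 2 * (1 - cos t) * (\<Sum>j=1..n. (real (n + 1 - j) - real (2 + 1 - j)) * sin (real j * t))" .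
  moreover have "0 < 2 * (1 - cos t)" using one_minus_cos_pos[of t] t by simp
  ultimately show "(\<Sum>j=1..n. (real (n + 1 - j) - real (2 + 1 - j)) * sin (real j * t)) > 0"
    by (simp add: zero_less_mult_iff)
qed

lemma prod_shift: "(\<Prod>i=1..Suc k. (a - 1 + real i)) = a * (\<Prod>i=1..k. (a + real i))"
proof (induction k)
  case 0 then show ?case by simp
next
  case (Suc k)
  have "(\<Prod>i=1..Suc (Suc k). (a - 1 + real i)) = (\<Prod>i=1..Suc k. (a - 1 + real i)) * (a - 1 + real (Suc (Suc k)))"
    by (simp add: prod.nat_ivl_Suc' mult.commute)
  also have "\<dots> = a * ((\<Prod>i=1..k. (a + real i)) * (a + real (Suc k)))" using Suc by simp
  also have "(\<Prod>i=1..k. (a + real i)) * (a + real (Suc k)) = (\<Prod>i=1..Suc k. (a + real i))"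
    by (simp add: prod.nat_ivl_Suc' mult.commute)
  finally show ?case .
qed

lemma frac_aux:
  fixes P a d F :: real
  assumes "F > 0" "d > 0"
  shows "P * (a + d) / (d * F) = a * P / (d * F) + P / F"
proof -
  have "P * (a + d) / (d * F) = a * P / (d * F) + (d * P) / (d * F)"
    by (simp add: add_divide_distrib algebra_simps)
  also have "(d * P) / (d * F) = P / F" using assms by simp
  finally show ?thesis .
qed

lemma pascal: "binom_ma (Suc k) a = binom_ma (Suc k) (a - 1) + binom_ma k a"
proof -
  define P where "P = (\<Prod>i=1..k. (a + real i))"
  have f: "fact (Suc k) = real (Suc k) * fact k" by simp
  have A: "binom_ma (Suc k) a = P * (a + real (Suc k)) / fact (Suc k)"
    unfolding binom_ma_def P_def by (simp add: prod.nat_ivl_Suc' mult.commute)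
  have B: "binom_ma (Suc k) (a - 1) = a * P / fact (Suc k)"
    unfolding binom_ma_def P_def by (simp only: prod_shift)
  have C: "binom_ma k a = P / fact k" unfolding binom_ma_def P_def by simp
  have "fact k > (0::real)" by simp
  show ?thesis unfolding A B C f using frac_aux[of "fact k" "real (Suc k)" P a] by simp
qed

lemma hockey: "binom_ma k a = (\<Sum>i=0..k. binom_ma i (a - 1))"
proof (induction k)
  case 0 then show ?case by (simp add: binom_ma_def)
next
  case (Suc k) then show ?case using pascal[of k a] by simp
qed

lemma decomp: "binom_ma k a = (\<Sum>l=0..k. real (k + 1 - l) * binom_ma l (a - 2))"
proof (induction k)
  case 0 then show ?case by (simp add: binom_ma_def)
next
  case (Suc k)
  have h: "binom_ma (Suc k) (a - 1) = (\<Sum>l=0..Suc k. binom_ma l (a - 2))"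
    using hockey[of "Suc k" "a - 1"] by simp
  have "(\<Sum>l=0..Suc k. real (Suc k + 1 - l) * binom_ma l (a - 2))
      = (\<Sum>l=0..Suc k. real (k + 1 - l) * binom_ma l (a - 2) + binom_ma l (a - 2))"
  proof (intro sum.cong refl)
    fix l assume "l \<in> {0..Suc k}"
    hence "Suc k + 1 - l = (k + 1 - l) + 1" by auto
    hence "real (Suc k + 1 - l) = real (k + 1 - l) + 1" by (simp only: of_nat_add of_nat_1)
    then show "real (Suc k + 1 - l) * binom_ma l (a - 2) = real (k + 1 - l) * binom_ma l (a - 2) + binom_ma l (a - 2)"
      by (simp only: distrib_right mult_1_left)
  qed
  also have "\<dots> = (\<Sum>l=0..k. real (k + 1 - l) * binom_ma l (a - 2)) + (\<Sum>l=0..Suc k. binom_ma l (a - 2))"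
    by (simp add: sum.distrib)
  also have "\<dots> = binom_ma k a + binom_ma (Suc k) (a - 1)" using Suc.IH h by simp
  also have "\<dots> = binom_ma (Suc k) a" using pascal[of k a] by simp
  finally show ?case by simp
qed

definition Phi :: "nat \<Rightarrow> nat \<Rightarrow> real \<Rightarrow> real \<Rightarrow> real" where
  "Phi n m x y = (\<Sum>j=1..n. real (m + 1 - j) * sin (real j * x) * sin (real j * y) / real j)"

lemma Theta_decomp:
  "Theta n a x y = (\<Sum>l=0..n. binom_ma l (a - 2) * Phi n (n - l) x y)"
proof -
  let ?s = "\<lambda>j. sin (real j * x) * sin (real j * y) / real j"
  have c: "binom_ma (n - j) a = (\<Sum>l=0..n. real (n - j + 1 - l) * binom_ma l (a - 2))" for j
  proof -
    have "(\<Sum>l=0..n. real (n - j + 1 - l) * binom_ma l (a - 2)) = (\<Sum>l=0..n-j. real (n - j + 1 - l) * binom_ma l (a - 2))"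
      by (intro sum.mono_neutral_right) auto
    then show ?thesis using decomp[of "n - j" a] by simp
  qed
  have "Theta n a x y = (\<Sum>j=1..n. binom_ma (n - j) a * ?s j)"
    unfolding Theta_def by (intro sum.cong refl) (simp add: mult.assoc)
  also have "\<dots> = (\<Sum>j=1..n. \<Sum>l=0..n. binom_ma l (a - 2) * (real (n - j + 1 - l) * ?s j))"
    unfolding c sum_distrib_right by (intro sum.cong refl) (simp add: mult_ac)
  also have "\<dots> = (\<Sum>l=0..n. \<Sum>j=1..n. binom_ma l (a - 2) * (real (n - j + 1 - l) * ?s j))"
    by (rule sum.swap)
  also have "\<dots> = (\<Sum>l=0..n. binom_ma l (a - 2) * Phi n (n - l) x y)"
  proof (intro sum.cong refl)
    fix l assume l: "l \<in> {0..n}"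
    have "(\<Sum>j=1..n. binom_ma l (a - 2) * (real (n - j + 1 - l) * ?s j))
        = binom_ma l (a - 2) * (\<Sum>j=1..n. real (n - l + 1 - j) * ?s j)"
      unfolding sum_distrib_left
    proof (intro sum.cong refl)
      fix j assume j: "j \<in> {1..n}"
      have "n - j + 1 - l = n - l + 1 - j" using l j by auto
      then show "binom_ma l (a - 2) * (real (n - j + 1 - l) * ?s j) = binom_ma l (a - 2) * (real (n - l + 1 - j) * ?s j)"
        by simp
    qed
    also have "\<dots> = binom_ma l (a - 2) * Phi n (n - l) x y"
      unfolding Phi_def by (simp add: mult.assoc)
    finally show "(\<Sum>j=1..n. binom_ma l (a - 2) * (real (n - j + 1 - l) * ?s j)) = binom_ma l (a - 2) * Phi n (n - l) x y" .
  qed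
  finally show ?thesis .
qed

lemma Phi_nonneg:
  assumes "m \<le> n" and x: "0 < x" "x < pi" and y: "0 < y" "y < pi"
  shows "Phi n m x y \<ge> 0"
proof (cases "m = 0")
  case True
  have "Phi n m x y = 0" unfolding Phi_def True by (intro sum.neutral) auto
  then show ?thesis by simp
next
  case False
  then show ?thesis using Phi_pos[of m n x y] assms unfolding Phi_def by auto
qed

lemma Phi2:
  assumes "2 \<le> n"
  shows "Phi n 2 x y = 2 * sin x * sin y * (1 + cos x * cos y)"
proof -
  have "Phi n 2 x y = (\<Sum>j=1..2. real (2 + 1 - j) * sin (real j * x) * sin (real j * y) / real j)"
    unfolding Phi_def using assms by (intro sum.mono_neutral_right) auto
  also have "\<dots> = 2 * sin x * sin y + sin (2 * x) * sin (2 * y) / 2"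
    by (simp add: sum.atLeast_Suc_atMost numeral_2_eq_2)
  also have "\<dots> = 2 * sin x * sin y * (1 + cos x * cos y)"
    unfolding sin_double by (simp add: algebra_simps)
  finally show ?thesis .
qed

lemma b_nonneg: assumes "a \<ge> 1" shows "binom_ma l (a - 2) \<ge> 0"
  unfolding binom_ma_def using assms by (intro divide_nonneg_pos prod_nonneg) auto

lemma b_zero: assumes "1 \<le> l" shows "binom_ma l (- 1) = 0"
proof -
  have "(\<Prod>i=1..l. (- 1 + real i)) = 0"
    using assms by (intro prod_zero) (auto intro!: bexI[of _ 1])
  then show ?thesis unfolding binom_ma_def by simp
qed

lemma b1: "binom_ma 1 (a - 2) = a - 1" unfolding binom_ma_def by simp
lemma b0: "binom_ma 0 c = 1" unfolding binom_ma_def by simp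

theorem theorem3p8:
  fixes n :: nat and a x y :: real
  assumes "even n" and "n \<ge> 2" and "a \<ge> 1"
    and "0 < x" and "x < pi" and "0 < y" and "y < pi"
  shows "Theta n a x y \<ge> 2 * sin x * sin y * (1 + cos x * cos y)
         \<and> (Theta n a x y = 2 * sin x * sin y * (1 + cos x * cos y) \<longleftrightarrow> n = 2 \<and> a = 1)"
proof -
  let ?T = "2 * sin x * sin y * (1 + cos x * cos y)"
  define R where "R = (\<Sum>l=1..n. binom_ma l (a - 2) * Phi n (n - l) x y)"
  have dec: "Theta n a x y = Phi n n x y + R"
    unfolding Theta_decomp R_def by (simp add: sum.atLeast_Suc_atMost b0)
  have Rnn: "R \<ge> 0" unfolding R_def
    using assms by (intro sum_nonneg mult_nonneg_nonneg b_nonneg Phi_nonneg) auto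
  have D: "Phi n n x y - ?T \<ge> 0 \<and> (Phi n n x y - ?T = 0 \<longleftrightarrow> n = 2)"
  proof (cases "n = 2")
    case True then show ?thesis using Phi2[of n x y] by simp
  next
    case False
    hence "4 \<le> n" using assms(1,2) by presburger
    have "Phi n n x y - ?T = (\<Sum>j=1..n. (real (n + 1 - j) - real (2 + 1 - j)) * sin (real j * x) * sin (real j * y) / real j)"
      unfolding Phi2[OF assms(2), symmetric] Phi_def
      by (simp add: sum_subtractf[symmetric] left_diff_distrib diff_divide_distrib)
    also have "\<dots> > 0" using diff_pos[OF assms(1) \<open>4 \<le> n\<close>] assms by auto
    finally show ?thesis using False by simp
  qed
  have Req: "R = 0 \<longleftrightarrow> a = 1"
  proof
    assume "a = 1"
    then show "R = 0" unfolding R_def by (intro sum.neutral) (auto simp: b_zero)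
  next
    assume R0: "R = 0"
    show "a = 1"
    proof (rule ccontr)
      assume "a \<noteq> 1"
      hence "a > 1" using assms by simp
      have "0 < binom_ma 1 (a - 2) * Phi n (n - 1) x y"
        unfolding b1 using \<open>a > 1\<close> Phi_pos[of "n - 1" n x y] assms unfolding Phi_def by simp
      also have "\<dots> \<le> R" unfolding R_def
        using assms by (intro member_le_sum mult_nonneg_nonneg b_nonneg Phi_nonneg) auto
      finally show False using R0 by simp
    qed
  qed
  show ?thesis using dec D Req Rnn by auto
qed

end
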